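(* Suppose $E_3\subset S=\mathrm{span}_{\mathbb{C}}\{I_1,\dots,I_m\}$, i.e. $a_k=b_k=0$ for all $k=m+1,\dots,n$. Then for every circle $C$ as described in the context, $\lambda:=\int_C\zeta^{-1}\,d\zeta=2\pi i$ (that is, $2\pi i$ times the unit of $\mathbb{A}_n^m$).
   Context: Fix natural numbers $m\le n$. $\mathbb{A}_n^m$ is a commutative associative algebra with unit over $\mathbb{C}$ with a basis $\{I_k\}_{k=1}^n$ satisfying: (1) for $r,s\in\{1,\dots,m\}$, $I_rI_s=0$ if $r\ne s$ and $I_rI_r=I_r$; (2) for $r,s\in\{m+1,\dots,n\}$, $I_rI_s=\sum_{k=\max\{r,s\}+1}^{n}\Upsilon^{s}_{r,k}I_k$ with constants $\Upsilon^s_{r,k}\in\mathbb{C}$; (3) for each $s\in\{m+1,\dots,n\}$ there is a unique $u_s\in\{1,\dots,m\}$ such that for $r\in\{1,\dots,m\}$, $I_rI_s=I_s$ if $r=u_s$ and $0$ otherwise. Unit $1=\sum_{u=1}^mI_u$; $\mathbb{A}_n^m=S\oplus_sN$ with $S=\mathrm{span}\{I_1,\dots,I_m\}$, $N=\mathrm{span}\{I_{m+1},\dots,I_n\}$. $f_u(\sum_k\lambda_kI_k)=\lambda_u$. Let $e_1=1$, $e_2=\sum_ka_kI_k$, $e_3=\sum_kb_kI_k$ ($a_k,b_k\in\mathbb{C}$) be linearly independent over $\mathbb{R}$; $\zeta=xe_1+ye_2+ze_3$ ($x,y,z\in\mathbb{R}$), $E_3$ their real span. Standing assumption: $f_u(E_3)=\mathbb{C}$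 for all $u=1,\dots,m$. $\zeta$ is non-invertible exactly when $(x,y,z)$ lies on one of the lines $L_u=\{x+y\,\mathrm{Re}\,a_u+z\,\mathrm{Re}\,b_u=0,\ y\,\mathrm{Im}\,a_u+z\,\mathrm{Im}\,b_u=0\}$. The circle: $C\subset E_3$ is $C=\{xe_1+ye_2+ze_3:(x,y,z)\in C'\}$ for a Euclidean circle $C'\subset\mathbb{R}^3$ of radius $R>0$ centered at the origin, such that for every $u$ the image $f_u(C)$ is a positively oriented closed Jordan curve in $\mathbb{C}$ bounding a domain containing $0$. Integral: for a Jordan rectifiable curve $\gamma$ and continuous $\Psi=\sum_k(U_k+iV_k)I_k$ on $\gamma_\zeta$, $\int_{\gamma_\zeta}\Psi d\zeta:=\sum_kI_k\int_\gamma(U_k+iV_k)dx+\sum_ke_2I_k\int_\gamma(U_k+iV_k)dy+\sum_ke_3I_k\int_\gamma(U_k+iV_k)dz$. *)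

theory Defs
  imports "HOL-Complex_Analysis.Complex_Analysis"
begin

text \<open>Elements of the algebra A_n^m are represented by their coordinate functions
  with respect to the basis I_1, ..., I_n: an element sum_k lambda_k I_k is the function
  k |-> lambda_k, vanishing outside {1..n}.\<close>

type_synonym alg = "nat \<Rightarrow> complex"

definition alg_elem :: "nat \<Rightarrow> alg \<Rightarrow> bool" where
  "alg_elem n a \<longleftrightarrow> (\<forall>k. k \<notin> {1..n} \<longrightarrow> a k = 0)"

definition Ib :: "nat \<Rightarrow> alg" where
  "Ib k = (\<lambda>j. if j = k then 1 else 0)"

text \<open>Coefficient of I_k in the product I_r I_s, following rules (1)-(3);
  Ups r s k stands for Upsilon^s_{r,k}, us s for u_s.\<close>
definition bmul :: "nat \<Rightarrow> nat \<Rightarrow> (nat \<Rightarrow> nat \<Rightarrow> nat \<Rightarrow> complex) \<Rightarrow> (nat \<Rightarrow> nat)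
    \<Rightarrow> nat \<Rightarrow> nat \<Rightarrow> nat \<Rightarrow> complex" where
  "bmul n m Ups us r s k =
     (if r \<le> m \<and> s \<le> m then (if r = s \<and> k = r then 1 else 0)
      else if m < r \<and> m < s then (if max r s < k \<and> k \<le> n then Ups r s k else 0)
      else if r \<le> m then (if r = us s \<and> k = s then 1 else 0)
      else (if s = us r \<and> k = r then 1 else 0))"

definition amul :: "nat \<Rightarrow> nat \<Rightarrow> (nat \<Rightarrow> nat \<Rightarrow> nat \<Rightarrow> complex) \<Rightarrow> (nat \<Rightarrow> nat)
    \<Rightarrow> alg \<Rightarrow> alg \<Rightarrow> alg" where
  "amul n m Ups us a b = (\<lambda>k. \<Sum>r\<in>{1..n}. \<Sum>s\<in>{1..n}. a r * b s * bmul n m Ups us r s k)"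

definition aone :: "nat \<Rightarrow> alg" where
  "aone m = (\<lambda>k. if 1 \<le> k \<and> k \<le> m then 1 else 0)"

definition ainv :: "nat \<Rightarrow> nat \<Rightarrow> (nat \<Rightarrow> nat \<Rightarrow> nat \<Rightarrow> complex) \<Rightarrow> (nat \<Rightarrow> nat)
    \<Rightarrow> alg \<Rightarrow> alg" where
  "ainv n m Ups us w = (THE v. alg_elem n v \<and> amul n m Ups us w v = aone m)"

text \<open>zeta = x e_1 + y e_2 + z e_3 with e_1 = 1, e_2 = sum a_k I_k, e_3 = sum b_k I_k.\<close>
definition zeta :: "nat \<Rightarrow> alg \<Rightarrow> alg \<Rightarrow> real \<Rightarrow> real \<Rightarrow> real \<Rightarrow> alg" where
  "zeta m a b x y z = (\<lambda>k. of_real x * aone m k + of_real y * a k + of_real z * b k)"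

definition circ :: "real \<Rightarrow> real^3 \<Rightarrow> real^3 \<Rightarrow> real \<Rightarrow> real^3" where
  "circ R p q t = R *\<^sub>R (cos t *\<^sub>R p + sin t *\<^sub>R q)"

text \<open>The integral int_{gamma_zeta} Psi d zeta along a C^1 parametrised curve
  gamma : [lo, hi] -> R^3, where Psi t is the value of Psi at the point zeta(gamma t):
  sum_k I_k int Psi_k dx + sum_k e_2 I_k int Psi_k dy + sum_k e_3 I_k int Psi_k dz.\<close>
definition curve_int :: "nat \<Rightarrow> nat \<Rightarrow> (nat \<Rightarrow> nat \<Rightarrow> nat \<Rightarrow> complex) \<Rightarrow> (nat \<Rightarrow> nat)
    \<Rightarrow> alg \<Rightarrow> alg \<Rightarrow> (real \<Rightarrow> alg) \<Rightarrow> (real \<Rightarrow> real^3) \<Rightarrow> real \<Rightarrow> real \<Rightarrow> alg" where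
  "curve_int n m Ups us e2 e3 Psi \<gamma> lo hi =
     (let J = (\<lambda>i k. integral {lo..hi} (\<lambda>t. Psi t k * of_real (deriv (\<lambda>s. \<gamma> s $ i) t)))
      in (\<lambda>j. \<Sum>k\<in>{1..n}. J 1 k * Ib k j + J 2 k * amul n m Ups us e2 (Ib k) j
                           + J 3 k * amul n m Ups us e3 (Ib k) j))"

definition pos_jordan_around0 :: "(real \<Rightarrow> complex) \<Rightarrow> bool" where
  "pos_jordan_around0 g \<longleftrightarrow> simple_path g \<and> pathfinish g = pathstart g
     \<and> 0 \<in> inside (path_image g) \<and> (\<forall>w\<in>inside (path_image g). winding_number g w = 1)"

end

theory Submission
  imports Defs
begin


lemma bmul_low:
  assumes "r \<le> m"
  shows "bmul n m Ups us r s k = (if s = k then (if k \<le> m then (if r = k then 1 else 0)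
            else (if r = us k then 1 else 0)) else 0)"
  using assms unfolding bmul_def by auto

lemma amul_S:
  assumes w: "\<forall>k. k \<notin> {1..m} \<longrightarrow> w k = 0" and mn: "m \<le> n"
  shows "amul n m Ups us w v k = (if k \<in> {1..m} then w k * v k
           else if k \<in> {m+1..n} then w (us k) * v k else 0)" (is "_ = ?rhs")
proof -
  have "amul n m Ups us w v k = (\<Sum>r\<in>{1..n}. \<Sum>s\<in>{1..n}. w r * (v s *
      (if s = k then (if k \<le> m then (if r = k then 1 else 0)
            else (if r = us k then 1 else 0)) else 0)))"
    unfolding amul_def
    apply (intro sum.cong refl)
    subgoal for r s using w[rule_format, of r] bmul_low[of r m n Ups us s k]
      by (cases "r \<le> m") auto
    done
  also have "\<dots> = (\<Sum>r\<in>{1..n}. w r * (if k \<in> {1..n} then v k *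
      (if k \<le> m then (if r = k then 1 else 0)
            else (if r = us k then 1 else 0)) else 0))"
    by (intro sum.cong refl) (auto simp: sum_distrib_left[symmetric] if_distrib sum.delta' cong: if_cong)
  also have "\<dots> = ?rhs"
    using mn w by (auto simp: sum.delta if_distrib[of "\<lambda>x. _ * x"] cong: if_cong)
  finally show ?thesis .
qed

lemma ainv_S:
  assumes w: "\<forall>k. k \<notin> {1..m} \<longrightarrow> w k = 0" and mn: "m \<le> n"
    and nz: "\<forall>k\<in>{1..m}. w k \<noteq> 0"
    and us: "\<forall>s\<in>{m+1..n}. us s \<in> {1..m}"
  shows "ainv n m Ups us w = (\<lambda>k. if k \<in> {1..m} then 1 / w k else 0)"
  unfolding ainv_def
proof (rule the_equality)
  show "alg_elem n (\<lambda>k. if k \<in> {1..m} then 1 / w k else 0) \<and>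
    amul n m Ups us w (\<lambda>k. if k \<in> {1..m} then 1 / w k else 0) = aone m"
    using mn nz by (auto simp: alg_elem_def aone_def amul_S[OF w mn] fun_eq_iff)
next
  fix v assume v: "alg_elem n v \<and> amul n m Ups us w v = aone m"
  show "v = (\<lambda>k. if k \<in> {1..m} then 1 / w k else 0)"
  proof
    fix k
    have e: "amul n m Ups us w v k = aone m k" using v by simp
    show "v k = (if k \<in> {1..m} then 1 / w k else 0)"
    proof (cases "k \<in> {1..m}")
      case True
      with e nz show ?thesis by (auto simp: amul_S[OF w mn] aone_def field_simps)
    next
      case False
      show ?thesis
      proof (cases "k \<in> {m+1..n}")
        case True
        with e nz us False show ?thesis by (auto simp: amul_S[OF w mn] aone_def)
      next
        case False
        with \<open>k \<notin> {1..m}\<close> v show ?thesis by (auto simp: alg_elem_def)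
      qed
    qed
  qed
qed


lemma circle_int:
  fixes R :: real and p q :: "real^3" and \<alpha> \<beta> :: complex
  defines "Z \<equiv> \<lambda>t. of_real (R*(cos t * p $ 1 + sin t * q $ 1)) + of_real (R*(cos t * p $ 2 + sin t * q $ 2)) * \<alpha>
                   + of_real (R*(cos t * p $ 3 + sin t * q $ 3)) * \<beta>"
  defines "Z' \<equiv> \<lambda>t. of_real (R*(- sin t * p $ 1 + cos t * q $ 1)) + of_real (R*(- sin t * p $ 2 + cos t * q $ 2)) * \<alpha>
                   + of_real (R*(- sin t * p $ 3 + cos t * q $ 3)) * \<beta>"
  assumes pj: "pos_jordan_around0 (\<lambda>s. Z (2*pi * s))"
  shows "\<forall>t\<in>{0..2*pi}. Z t \<noteq> 0"
    and "((\<lambda>t. 1 / Z t * Z' t) has_integral 2*pi*\<i>) {0..2*pi}"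
    and "integral {0..2*pi} (\<lambda>t. 1 / Z t * of_real (R*(- sin t * p $ 1 + cos t * q $ 1)))
       + integral {0..2*pi} (\<lambda>t. 1 / Z t * of_real (R*(- sin t * p $ 2 + cos t * q $ 2))) * \<alpha>
       + integral {0..2*pi} (\<lambda>t. 1 / Z t * of_real (R*(- sin t * p $ 3 + cos t * q $ 3))) * \<beta> = 2*pi*\<i>"
proof -
  define g where "g = (\<lambda>s. Z (2*pi * s))"
  have dZ: "(Z has_vector_derivative Z' t) (at t)" for t
    unfolding Z_def Z'_def
    by (rule derivative_eq_intros refl | simp)+
  have dg: "(g has_vector_derivative (2*pi) *\<^sub>R Z' (2*pi * s)) (at s)" for s
  proof -
    have "((\<lambda>s. 2*pi * s) has_vector_derivative 2*pi) (at s)"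
      by (auto intro!: derivative_eq_intros simp: has_real_derivative_iff_has_vector_derivative[symmetric])
    from vector_diff_chain_at[OF this dZ] show ?thesis by (simp add: g_def o_def)
  qed
  have cZ': "continuous_on UNIV Z'" unfolding Z'_def by (intro continuous_intros)
  have cZ: "continuous_on UNIV Z" unfolding Z_def by (intro continuous_intros)
  have vp: "valid_path g"
    unfolding valid_path_def
    apply (rule C1_differentiable_imp_piecewise)
    unfolding C1_differentiable_on_def
    apply (rule exI[of _ "\<lambda>s. (2*pi) *\<^sub>R Z' (2*pi * s)"])
    using dg by (auto intro!: continuous_intros continuous_on_compose2[OF cZ'])
  have "0 \<in> inside (path_image g)" using pj unfolding pos_jordan_around0_def g_def by auto
  hence n0: "0 \<notin> path_image g" using inside_no_overlap by blast
  have w1: "winding_number g 0 = 1" using pj \<open>0 \<in> inside (path_image g)\<close>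
    unfolding pos_jordan_around0_def g_def by auto
  show nz: "\<forall>t\<in>{0..2*pi}. Z t \<noteq> 0"
  proof
    fix t assume t: "t \<in> {0..2*pi}"
    hence "t/(2*pi) \<in> {0..1}" by auto
    hence "g (t/(2*pi)) \<in> path_image g" unfolding path_image_def by blast
    moreover have "g (t/(2*pi)) = Z t" by (simp add: g_def)
    ultimately show "Z t \<noteq> 0" using n0 by metis
  qed
  have "((\<lambda>w. 1/(w - 0)) has_contour_integral (2*pi*\<i>*winding_number g 0)) g"
    by (rule has_contour_integral_winding_number[OF vp n0])
  hence "((\<lambda>x. 1/(g x - 0) * vector_derivative g (at x within {0..1})) has_integral 2*pi*\<i>) {0..1}"
    unfolding has_contour_integral_def w1 by simp
  hence "((\<lambda>x. (2*pi) *\<^sub>R (1 / Z (2*pi * x) * Z' (2*pi * x))) has_integral 2*pi*\<i>) {0..1}"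
  proof (rule has_integral_eq[rotated])
    fix x :: real assume x: "x \<in> {0..1}"
    have "vector_derivative g (at x within cbox 0 1) = (2*pi) *\<^sub>R Z' (2*pi * x)"
      by (rule vector_derivative_within_cbox) (use x dg has_vector_derivative_at_within in \<open>auto intro: has_vector_derivative_at_within\<close>)
    thus "1/(g x - 0) * vector_derivative g (at x within {0..1}) = (2*pi) *\<^sub>R (1 / Z (2*pi * x) * Z' (2*pi * x))"
      by (simp add: g_def scaleR_conv_of_real)
  qed
  hence "((\<lambda>x. (1 / Z (2*pi * x) * Z' (2*pi * x))) has_integral (1/(2*pi)) *\<^sub>R (2*pi*\<i>)) {0..1}"
    using has_integral_cmul[where c="1/(2*pi)"] by force
  hence "((\<lambda>x. (1 / Z (2*pi * x) * Z' (2*pi * x))) has_integral (1/(2*pi)) *\<^sub>R (2*pi*\<i>)) ((\<lambda>x. x/(2*pi)) ` {0..2*pi})"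
    by simp
  hence "((\<lambda>t. 1 / Z t * Z' t) has_integral \<bar>2*pi\<bar> *\<^sub>R ((1/(2*pi)) *\<^sub>R (2*pi*\<i>))) {0..2*pi}"
  proof -
    have e: "{0/(2*pi)..(2*pi)/(2*pi)} = {0..1::real}" by simp
    have "((\<lambda>x. (1 / Z (2*pi * x) * Z' (2*pi * x))) has_integral (1/(2*pi)) *\<^sub>R (2*pi*\<i>)) {0/(2*pi)..(2*pi)/(2*pi)}"
      unfolding e by fact
    thus ?thesis
      using has_integral_stretch_real_iff[of "2*pi" "\<lambda>t. 1 / Z t * Z' t" "(1/(2*pi)) *\<^sub>R (2*pi*\<i>)" 0 "2*pi"]
      by simp
  qed
  thus HI: "((\<lambda>t. 1 / Z t * Z' t) has_integral 2*pi*\<i>) {0..2*pi}" by simp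
  have int: "(\<lambda>t. 1 / Z t * of_real (R*(- sin t * p $ i + cos t * q $ i))) integrable_on {0..2*pi}" for i
  proof (rule integrable_continuous_interval)
    have cZs: "continuous_on {0..2*pi} Z" using continuous_on_subset[OF cZ] by blast
    have "continuous_on {0..2*pi} (\<lambda>t. 1 / Z t)"
      by (rule continuous_on_divide[OF continuous_on_const cZs]) (use nz in auto)
    moreover have "continuous_on {0..2*pi} (\<lambda>t. of_real (R*(- sin t * p $ i + cos t * q $ i)) :: complex)"
      by (intro continuous_intros)
    ultimately show "continuous_on {0..2*pi} (\<lambda>t. 1 / Z t * of_real (R*(- sin t * p $ i + cos t * q $ i)))"
      by (rule continuous_on_mult)
  qed
  let ?I = "\<lambda>i. integral {0..2*pi} (\<lambda>t. 1 / Z t * of_real (R*(- sin t * p $ i + cos t * q $ i)))"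
  have "((\<lambda>t. 1 / Z t * of_real (R*(- sin t * p $ 1 + cos t * q $ 1))
      + 1 / Z t * of_real (R*(- sin t * p $ 2 + cos t * q $ 2)) * \<alpha>
      + 1 / Z t * of_real (R*(- sin t * p $ 3 + cos t * q $ 3)) * \<beta>) has_integral
      (?I 1 + ?I 2 * \<alpha> + ?I 3 * \<beta>)) {0..2*pi}"
    by (intro has_integral_add has_integral_mult_left; rule integrable_integral[OF int])
  moreover have E: "(\<lambda>t. 1 / Z t * of_real (R*(- sin t * p $ 1 + cos t * q $ 1))
      + 1 / Z t * of_real (R*(- sin t * p $ 2 + cos t * q $ 2)) * \<alpha>
      + 1 / Z t * of_real (R*(- sin t * p $ 3 + cos t * q $ 3)) * \<beta>) = (\<lambda>t. 1 / Z t * Z' t)"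
    unfolding Z'_def by (simp only: distrib_left mult.assoc)
  ultimately have "((\<lambda>t. 1 / Z t * Z' t) has_integral (?I 1 + ?I 2 * \<alpha> + ?I 3 * \<beta>)) {0..2*pi}"
    by (simp only:)
  then show "?I 1 + ?I 2 * \<alpha> + ?I 3 * \<beta> = 2*pi*\<i>"
    using HI by (rule has_integral_unique)
qed


theorem theorem9:
  fixes n m :: nat and Ups :: "nat \<Rightarrow> nat \<Rightarrow> nat \<Rightarrow> complex" and us :: "nat \<Rightarrow> nat"
    and a b :: "nat \<Rightarrow> complex" and R :: real and p q :: "real^3"
  assumes mn: "1 \<le> m" "m \<le> n"
    and us: "\<forall>s\<in>{m+1..n}. us s \<in> {1..m}"
    and comm: "\<forall>x y. alg_elem n x \<and> alg_elem n y \<longrightarrow> amul n m Ups us x y = amul n m Ups us y x"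
    and assoc: "\<forall>x y z. alg_elem n x \<and> alg_elem n y \<and> alg_elem n z \<longrightarrow>
        amul n m Ups us (amul n m Ups us x y) z = amul n m Ups us x (amul n m Ups us y z)"
    and ae: "alg_elem n a" and be: "alg_elem n b"
    and indep: "\<forall>x y z. zeta m a b x y z = (\<lambda>k. 0) \<longrightarrow> x = 0 \<and> y = 0 \<and> z = 0"
    and surj: "\<forall>u\<in>{1..m}. {of_real x + of_real y * a u + of_real z * b u | x y z. True} = UNIV"
    and inS: "\<forall>k\<in>{m+1..n}. a k = 0 \<and> b k = 0"
    and R: "R > 0"
    and pq: "p \<bullet> p = 1" "q \<bullet> q = 1" "p \<bullet> q = 0"
    and orient: "\<forall>u\<in>{1..m}. pos_jordan_around0
        (\<lambda>s. let c = circ R p q (2 * pi * s)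
             in of_real (c $ 1) + of_real (c $ 2) * a u + of_real (c $ 3) * b u)"
  shows "curve_int n m Ups us a b
           (\<lambda>t. let c = circ R p q t in ainv n m Ups us (zeta m a b (c $ 1) (c $ 2) (c $ 3)))
           (circ R p q) 0 (2 * pi)
         = (\<lambda>k. 2 * pi * \<i> * aone m k)"
  proof -
  have circ_c: "\<And>t i. circ R p q t $ i = R * (cos t * p $ i + sin t * q $ i)"
    by (simp add: circ_def)
  have dderiv: "\<And>t i. deriv (\<lambda>s. circ R p q s $ i) t = R * (- sin t * p $ i + cos t * q $ i)"
    unfolding circ_c by (rule DERIV_imp_deriv) (auto intro!: derivative_eq_intros)
  have a0: "\<forall>k. k \<notin> {1..m} \<longrightarrow> a k = 0"
  proof (intro allI impI)
    fix k :: nat assume k: "k \<notin> {1..m}"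
    show "a k = 0"
    proof (cases "k \<in> {1..n}")
      case True with k inS show ?thesis by auto
    next
      case False with ae show ?thesis by (auto simp: alg_elem_def)
    qed
  qed
  have b0: "\<forall>k. k \<notin> {1..m} \<longrightarrow> b k = 0"
  proof (intro allI impI)
    fix k :: nat assume k: "k \<notin> {1..m}"
    show "b k = 0"
    proof (cases "k \<in> {1..n}")
      case True with k inS show ?thesis by auto
    next
      case False with be show ?thesis by (auto simp: alg_elem_def)
    qed
  qed
  define Zf where "Zf k t = of_real (R*(cos t * p $ 1 + sin t * q $ 1)) + of_real (R*(cos t * p $ 2 + sin t * q $ 2)) * a k
                   + of_real (R*(cos t * p $ 3 + sin t * q $ 3)) * b k" for k t
  define Ji where "Ji i k = integral {0..2*pi} (\<lambda>t. 1 / Zf k t * of_real (R*(- sin t * p $ i + cos t * q $ i)))" for i k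
  have CI: "(\<forall>t\<in>{0..2*pi}. Zf u t \<noteq> 0) \<and> Ji 1 u + Ji 2 u * a u + Ji 3 u * b u = 2*pi*\<i>"
    if u: "u \<in> {1..m}" for u
  proof -
    have pj: "pos_jordan_around0 (\<lambda>s. Zf u (2 * pi * s))"
      using orient u unfolding Let_def circ_c Zf_def by simp
    show ?thesis
      using circle_int(1,3)[of R p q "a u" "b u", OF pj[unfolded Zf_def]]
      unfolding Ji_def Zf_def by simp
  qed
  have Psi: "ainv n m Ups us (zeta m a b (circ R p q t $ 1) (circ R p q t $ 2) (circ R p q t $ 3))
      = (\<lambda>k. if k \<in> {1..m} then 1 / Zf k t else 0)" if t: "t \<in> {0..2*pi}" for t
  proof -
    let ?w = "zeta m a b (circ R p q t $ 1) (circ R p q t $ 2) (circ R p q t $ 3)"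
    have w: "?w k = (if k \<in> {1..m} then Zf k t else 0)" for k
      using a0 b0 by (auto simp: zeta_def aone_def Zf_def circ_c)
    have "ainv n m Ups us ?w = (\<lambda>k. if k \<in> {1..m} then 1 / ?w k else 0)"
      by (rule ainv_S) (use w CI t mn us in auto)
    thus ?thesis using w by auto
  qed
  have Jeq: "integral {0..2*pi} (\<lambda>t. ainv n m Ups us (zeta m a b (circ R p q t $ 1) (circ R p q t $ 2) (circ R p q t $ 3)) k
        * of_real (R * (- sin t * p $ i + cos t * q $ i)))
      = (if k \<in> {1..m} then Ji i k else 0)" for i k
  proof -
    have "integral {0..2*pi} (\<lambda>t. ainv n m Ups us (zeta m a b (circ R p q t $ 1) (circ R p q t $ 2) (circ R p q t $ 3)) k
        * of_real (R * (- sin t * p $ i + cos t * q $ i)))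
      = integral {0..2*pi} (\<lambda>t. (if k \<in> {1..m} then 1 / Zf k t else 0) * of_real (R * (- sin t * p $ i + cos t * q $ i)))"
      by (rule integral_cong) (simp add: Psi)
    also have "(\<lambda>t. (if k \<in> {1..m} then 1 / Zf k t else 0) * of_real (R * (- sin t * p $ i + cos t * q $ i)))
       = (if k \<in> {1..m} then (\<lambda>t. 1 / Zf k t * of_real (R * (- sin t * p $ i + cos t * q $ i))) else (\<lambda>t. 0))"
      by auto
    also have "integral {0..2*pi} \<dots> = (if k \<in> {1..m} then Ji i k else 0)"
      by (cases "k \<in> {1..m}") (simp_all only: if_True if_False Ji_def integral_0)
    finally show ?thesis .
  qed
  show ?thesis
    unfolding curve_int_def Let_def dderiv Jeq
  proof (rule ext)
    fix j :: nat
    let ?T = "\<lambda>k. (if k \<in> {1..m} then Ji 1 k else 0) * Ib k j +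
             (if k \<in> {1..m} then Ji 2 k else 0) * amul n m Ups us a (Ib k) j +
             (if k \<in> {1..m} then Ji 3 k else 0) * amul n m Ups us b (Ib k) j"
    let ?X = "if j \<in> {1..m} then Ji 1 j + Ji 2 j * a j + Ji 3 j * b j else 0"
    have T: "?T k = (if k = j then ?X else 0)" for k
      by (auto simp: amul_S[OF a0 mn(2)] amul_S[OF b0 mn(2)] Ib_def)
    have "(\<Sum>k\<in>{1..n}. ?T k) = (\<Sum>k\<in>{1..n}. if k = j then ?X else 0)"
      by (simp only: T)
    also have "\<dots> = (if j \<in> {1..n} then ?X else 0)"
      by (rule sum.delta) simp
    also have "\<dots> = 2 * pi * \<i> * aone m j"
      using CI[of j] mn by (auto simp: aone_def)
    finally show "(\<Sum>k\<in>{1..n}. ?T k) = 2 * pi * \<i> * aone m j" .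
  qed
qed

end
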